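(* Let $G$ be a graph, $x\in V(G)$ and $N_G(x)=Y\cup Z$ a partition into disjoint (possibly empty) sets. Then $\operatorname{Ind}(\mathcal{L}_x(G;Y,Z))$ is homotopy equivalent to the (unreduced) suspension $\Sigma\operatorname{Ind}(G)$.
   Context: $\operatorname{Ind}(G)$ is the independence complex of $G$. The Lozin transform $\mathcal{L}_x(G;Y,Z)$: delete $x$, add four new vertices $y,a,b,z$ with edges $ya,ab,bz$, and join $y$ to every vertex of $Y$ and $z$ to every vertex of $Z$. *)

theory Defs
  imports "HOL-Analysis.Analysis"
begin

definition simple_graph :: "'a set \<Rightarrow> ('a \<Rightarrow> 'a \<Rightarrow> bool) \<Rightarrow> bool" where
  "simple_graph V E \<longleftrightarrow> finite V \<and> (\<forall>u w. E u w \<longrightarrow> E w u) \<and> (\<forall>u. \<not> E u u)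
     \<and> (\<forall>u w. E u w \<longrightarrow> u \<in> V \<and> w \<in> V)"

definition nbhd :: "'a set \<Rightarrow> ('a \<Rightarrow> 'a \<Rightarrow> bool) \<Rightarrow> 'a \<Rightarrow> 'a set" where
  "nbhd V E x = {v \<in> V. E x v}"

definition Ind :: "'a set \<Rightarrow> ('a \<Rightarrow> 'a \<Rightarrow> bool) \<Rightarrow> 'a set set" where
  "Ind V E = {\<sigma>. \<sigma> \<subseteq> V \<and> (\<forall>u\<in>\<sigma>. \<forall>w\<in>\<sigma>. \<not> E u w)}"

text \<open>Geometric realisation of a (finite) abstract simplicial complex K on vertex type 'v,
  as the set of barycentric-coordinate functions supported on a face, inside 'v \<Rightarrow> real
  (product topology).\<close>
definition realization :: "'v set set \<Rightarrow> ('v \<Rightarrow> real) set" where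
  "realization K = {f. (\<exists>\<sigma>\<in>K. finite \<sigma> \<and> {v. f v \<noteq> 0} \<subseteq> \<sigma>) \<and> (\<forall>v. 0 \<le> f v)
                      \<and> sum f {v. f v \<noteq> 0} = 1}"

datatype 'a lv = Old 'a | Ny | Na | Nb | Nz

fun lozin_arc :: "'a set \<Rightarrow> ('a \<Rightarrow> 'a \<Rightarrow> bool) \<Rightarrow> 'a \<Rightarrow> 'a set \<Rightarrow> 'a set \<Rightarrow> 'a lv \<Rightarrow> 'a lv \<Rightarrow> bool" where
  "lozin_arc V E x Y Z (Old p) (Old q) = (p \<in> V - {x} \<and> q \<in> V - {x} \<and> E p q)"
| "lozin_arc V E x Y Z Ny (Old q) = (q \<in> Y)"
| "lozin_arc V E x Y Z Nz (Old q) = (q \<in> Z)"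
| "lozin_arc V E x Y Z Ny Na = True"
| "lozin_arc V E x Y Z Na Nb = True"
| "lozin_arc V E x Y Z Nb Nz = True"
| "lozin_arc V E x Y Z _ _ = False"

definition lozin_V :: "'a set \<Rightarrow> 'a \<Rightarrow> 'a lv set" where
  "lozin_V V x = Old ` (V - {x}) \<union> {Ny, Na, Nb, Nz}"

definition lozin_E :: "'a set \<Rightarrow> ('a \<Rightarrow> 'a \<Rightarrow> bool) \<Rightarrow> 'a \<Rightarrow> 'a set \<Rightarrow> 'a set \<Rightarrow> 'a lv \<Rightarrow> 'a lv \<Rightarrow> bool" where
  "lozin_E V E x Y Z u w \<longleftrightarrow> lozin_arc V E x Y Z u w \<or> lozin_arc V E x Y Z w u"

text \<open>Simplicial (unreduced) suspension: join with the two-point complex {North, South}.\<close>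
datatype 'v susp = SV 'v | North | South

definition suspension :: "'v set set \<Rightarrow> 'v susp set set" where
  "suspension K = (\<Union>\<sigma>\<in>K. {SV ` \<sigma>, insert North (SV ` \<sigma>), insert South (SV ` \<sigma>)})"

end

theory Submission
  imports Defs
begin

definition supp :: "('v \<Rightarrow> real) \<Rightarrow> 'v set" where "supp f = {v. f v \<noteq> 0}"

lemma sum_supp_eq: "finite S \<Longrightarrow> supp p \<subseteq> S \<Longrightarrow> sum p (supp p) = sum p S"
  by (rule sum.mono_neutral_left) (auto simp: supp_def)

lemma real_D:
  assumes "p \<in> realization K"
  shows "\<forall>v. 0 \<le> p v" "finite (supp p)" "sum p (supp p) = 1" "\<exists>\<sigma>\<in>K. finite \<sigma> \<and> supp p \<subseteq> \<sigma>"
  using assms by (auto simp: realization_def supp_def intro: finite_subset)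

lemma real_I:
  assumes "\<sigma> \<in> K" "finite \<sigma>" "supp p \<subseteq> \<sigma>" "\<forall>v. 0 \<le> p v" "sum p (supp p) = 1"
  shows "p \<in> realization K"
  using assms by (auto simp: realization_def supp_def)

lemma Ind_D:
  assumes "p \<in> realization (Ind W R)"
  shows "p u \<noteq> 0 \<Longrightarrow> u \<in> W" "p u \<noteq> 0 \<Longrightarrow> p w \<noteq> 0 \<Longrightarrow> \<not> R u w"
proof -
  obtain \<sigma> where s: "\<sigma> \<in> Ind W R" "supp p \<subseteq> \<sigma>" using real_D(4)[OF assms] by blast
  show "p u \<noteq> 0 \<Longrightarrow> u \<in> W" using s by (auto simp: Ind_def supp_def)
  show "p u \<noteq> 0 \<Longrightarrow> p w \<noteq> 0 \<Longrightarrow> \<not> R u w" using s by (auto simp: Ind_def supp_def)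
qed

lemma Ind_I: "A \<subseteq> W \<Longrightarrow> (\<And>u w. u \<in> A \<Longrightarrow> w \<in> A \<Longrightarrow> \<not> R u w) \<Longrightarrow> A \<in> Ind W R"
  by (auto simp: Ind_def)

lemma susp_D:
  assumes "q \<in> realization (suspension (Ind V E))"
  shows "q North = 0 \<or> q South = 0" "q (SV u) \<noteq> 0 \<Longrightarrow> u \<in> V"
    "q (SV u) \<noteq> 0 \<Longrightarrow> q (SV w) \<noteq> 0 \<Longrightarrow> \<not> E u w"
proof -
  obtain \<sigma> where s: "\<sigma> \<in> suspension (Ind V E)" "supp q \<subseteq> \<sigma>" using real_D(4)[OF assms] by blast
  then obtain \<tau> where t: "\<tau> \<in> Ind V E" "\<sigma> = SV ` \<tau> \<or> \<sigma> = insert North (SV ` \<tau>) \<or> \<sigma> = insert South (SV ` \<tau>)"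
    by (auto simp: suspension_def)
  show "q North = 0 \<or> q South = 0" using s t by (auto simp: supp_def)
  show "q (SV u) \<noteq> 0 \<Longrightarrow> u \<in> V" using s t by (auto simp: supp_def Ind_def)
  show "q (SV u) \<noteq> 0 \<Longrightarrow> q (SV w) \<noteq> 0 \<Longrightarrow> \<not> E u w" using s t by (auto simp: supp_def Ind_def)
qed

lemma susp_I:
  assumes "\<not> (North \<in> A \<and> South \<in> A)" "{v. SV v \<in> A} \<in> K"
  shows "A \<in> suspension K"
proof -
  let ?t = "{v. SV v \<in> A}"
  have "A = SV ` ?t \<or> A = insert North (SV ` ?t) \<or> A = insert South (SV ` ?t)"
  proof (cases "North \<in> A")
    case True
    then have "A = insert North (SV ` ?t)" using assms(1)
      by (intro set_eqI) (case_tac x; auto)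
    then show ?thesis by blast
  next
    case False
    show ?thesis
    proof (cases "South \<in> A")
      case True
      then have "A = insert South (SV ` ?t)" using False
        by (intro set_eqI) (case_tac x; auto)
      then show ?thesis by blast
    next
      case F2: False
      then have "A = SV ` ?t" using False
        by (intro set_eqI) (case_tac x; auto)
      then show ?thesis by blast
    qed
  qed
  then show ?thesis using assms(2) unfolding suspension_def by blast
qed

lemma coord_cont: "continuous_on S (\<lambda>p. p i)"
  by (rule continuous_on_subset[OF continuous_on_product_coordinates]) auto

lemma straight_line:
  fixes f g :: "('b \<Rightarrow> real) \<Rightarrow> 'v \<Rightarrow> real"
  assumes cf: "continuous_on S f" and cg: "continuous_on S g"
    and fS: "\<And>p. p \<in> S \<Longrightarrow> f p \<in> realization K"
    and gS: "\<And>p. p \<in> S \<Longrightarrow> g p \<in> realization K"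
    and carr: "\<And>p. p \<in> S \<Longrightarrow> \<exists>\<sigma>\<in>K. finite \<sigma> \<and> supp (f p) \<union> supp (g p) \<subseteq> \<sigma>"
  shows "homotopic_with (\<lambda>_. True) (top_of_set S) (top_of_set (realization K)) f g"
  unfolding homotopic_with_def
proof (rule exI[where x="\<lambda>y v. (1 - fst y) * f (snd y) v + fst y * g (snd y) v"], intro conjI allI ballI)
  let ?h = "\<lambda>y v. (1 - fst y) * f (snd y) v + fst y * g (snd y) v"
  have c: "continuous_on ({0..1} \<times> S) ?h"
  proof (intro continuous_on_coordinatewise_then_product)
    fix v
    have f1: "continuous_on ({0..1} \<times> S) (\<lambda>y. f (snd y) v)"
      by (rule continuous_on_compose2[OF continuous_on_product_then_coordinatewise[OF cf] continuous_on_snd]) auto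
    have g1: "continuous_on ({0..1} \<times> S) (\<lambda>y. g (snd y) v)"
      by (rule continuous_on_compose2[OF continuous_on_product_then_coordinatewise[OF cg] continuous_on_snd]) auto
    show "continuous_on ({0..1} \<times> S) (\<lambda>y. ?h y v)"
      by (intro continuous_intros f1 g1)
  qed
  have m: "?h y \<in> realization K" if y: "y \<in> {0..1} \<times> S" for y
  proof -
    obtain t p where yy: "y = (t, p)" and t: "0 \<le> t" "t \<le> 1" and p: "p \<in> S" using y by auto
    obtain \<sigma> where s: "\<sigma> \<in> K" "finite \<sigma>" "supp (f p) \<union> supp (g p) \<subseteq> \<sigma>" using carr[OF p] by blast
    have fp: "f p \<in> realization K" and gp: "g p \<in> realization K" using fS gS p by auto
    have nn: "\<forall>v. 0 \<le> f p v" "\<forall>v. 0 \<le> g p v" using fp gp by (auto simp: realization_def)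
    have sf: "sum (f p) \<sigma> = 1"
    proof -
      have "sum (f p) {v. f p v \<noteq> 0} = 1" using fp by (auto simp: realization_def)
      moreover have "sum (f p) {v. f p v \<noteq> 0} = sum (f p) \<sigma>"
        by (rule sum.mono_neutral_left) (use s in \<open>auto simp: supp_def\<close>)
      ultimately show ?thesis by simp
    qed
    have sg: "sum (g p) \<sigma> = 1"
    proof -
      have "sum (g p) {v. g p v \<noteq> 0} = 1" using gp by (auto simp: realization_def)
      moreover have "sum (g p) {v. g p v \<noteq> 0} = sum (g p) \<sigma>"
        by (rule sum.mono_neutral_left) (use s in \<open>auto simp: supp_def\<close>)
      ultimately show ?thesis by simp
    qed
    let ?q = "\<lambda>v. (1 - t) * f p v + t * g p v"
    have sub: "{v. ?q v \<noteq> 0} \<subseteq> \<sigma>" using s(3) by (force simp: supp_def)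
    have "sum ?q {v. ?q v \<noteq> 0} = sum ?q \<sigma>"
      by (rule sum.mono_neutral_left) (use s sub in auto)
    also have "\<dots> = (1 - t) * sum (f p) \<sigma> + t * sum (g p) \<sigma>"
      by (simp add: sum.distrib sum_distrib_left)
    also have "\<dots> = 1" using sf sg by simp
    finally have "sum ?q {v. ?q v \<noteq> 0} = 1" .
    moreover have "\<forall>v. 0 \<le> ?q v" using nn t by (simp add: add_nonneg_nonneg)
    ultimately show ?thesis unfolding yy realization_def using s sub by auto
  qed
  show "continuous_map (prod_topology (top_of_set {0..1}) (top_of_set S)) (top_of_set (realization K)) ?h"
    using c m by (auto simp: prod_topology_subtopology subtopology_subtopology Times_Int_Times)
qed auto


lemma sum_lv: "finite T \<Longrightarrow> sum (f :: _ lv \<Rightarrow> real) (insert Ny (insert Na (insert Nb (insert Nz (Old ` T))))) = sum (\<lambda>v. f (Old v)) T + f Ny + f Na + f Nb + f Nz"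
  apply (subst sum.insert, simp, force)+
  apply (subst sum.reindex, simp add: inj_on_def)
  apply (simp add: algebra_simps)
  done


lemma arithG:
  fixes w n s :: real
  assumes "0 \<le> w" "0 \<le> n" "0 \<le> s" "n = 0 \<or> s = 0"
  defines "u \<equiv> min n (w/2)" and "r \<equiv> min s (w/2)"
  defines "y \<equiv> w/2 + 2*u - r" and "z \<equiv> w/2 + 2*r - u" and "b \<equiv> n - u" and "a \<equiv> s - r"
  shows "0 \<le> y" "0 \<le> z" "0 \<le> a" "0 \<le> b" "\<not> (y \<noteq> 0 \<and> a \<noteq> 0)" "\<not> (a \<noteq> 0 \<and> b \<noteq> 0)"
    "\<not> (b \<noteq> 0 \<and> z \<noteq> 0)" "y \<noteq> 0 \<Longrightarrow> w \<noteq> 0" "z \<noteq> 0 \<Longrightarrow> w \<noteq> 0" "y + z + a + b = w + n + s"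
    "2 * min y z \<noteq> 0 \<Longrightarrow> w \<noteq> 0" "b + y - min y z \<noteq> 0 \<Longrightarrow> n \<noteq> 0" "a + z - min y z \<noteq> 0 \<Longrightarrow> s \<noteq> 0"
  using assms(1-4) unfolding u_def r_def y_def z_def b_def a_def
  by (auto simp: min_def split: if_splits)

lemma arithF:
  fixes py pz pa pb :: real
  assumes "0 \<le> py" "0 \<le> pz" "0 \<le> pa" "0 \<le> pb"
    "py = 0 \<or> pa = 0" "pa = 0 \<or> pb = 0" "pb = 0 \<or> pz = 0"
  defines "m \<equiv> min py pz"
  defines "n \<equiv> pb + py - m" and "s \<equiv> pa + pz - m"
  defines "u \<equiv> min n m" and "r \<equiv> min s m"
  defines "y' \<equiv> m + 2*u - r" and "z' \<equiv> m + 2*r - u" and "b' \<equiv> n - u" and "a' \<equiv> s - r"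
  defines "dy \<equiv> min pz (max 0 (py - pz))" and "dz \<equiv> min py (max 0 (pz - py))"
  defines "y'' \<equiv> py + dy - dz" and "z'' \<equiv> pz - dy + dz"
  shows "0 \<le> n" "0 \<le> s" "0 \<le> m" "\<not> (n \<noteq> 0 \<and> s \<noteq> 0)" "0 \<le> y''" "0 \<le> z''"
   "y'' \<noteq> 0 \<Longrightarrow> py \<noteq> 0" "z'' \<noteq> 0 \<Longrightarrow> pz \<noteq> 0" "y'' + z'' = py + pz"
   "y' \<noteq> 0 \<or> y'' \<noteq> 0 \<Longrightarrow> py \<noteq> 0"
   "z' \<noteq> 0 \<or> z'' \<noteq> 0 \<Longrightarrow> pz \<noteq> 0"
   "\<not> ((y' \<noteq> 0 \<or> y'' \<noteq> 0) \<and> (a' \<noteq> 0 \<or> pa \<noteq> 0))"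
   "\<not> ((b' \<noteq> 0 \<or> pb \<noteq> 0) \<and> (a' \<noteq> 0 \<or> pa \<noteq> 0))"
   "\<not> ((b' \<noteq> 0 \<or> pb \<noteq> 0) \<and> (z' \<noteq> 0 \<or> z'' \<noteq> 0))"
  using assms(1-7) unfolding m_def n_def s_def u_def r_def y'_def z'_def b'_def a'_def dy_def dz_def y''_def z''_def
  by (auto simp: min_def max_def split: if_splits)


definition lzF :: "'a \<Rightarrow> ('a lv \<Rightarrow> real) \<Rightarrow> 'a susp \<Rightarrow> real" where
  "lzF x p = (\<lambda>v. case v of SV w \<Rightarrow> if w = x then 2 * min (p Ny) (p Nz) else p (Old w)
     | North \<Rightarrow> p Nb + p Ny - min (p Ny) (p Nz) | South \<Rightarrow> p Na + p Nz - min (p Ny) (p Nz))"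

definition lzG :: "'a \<Rightarrow> ('a susp \<Rightarrow> real) \<Rightarrow> 'a lv \<Rightarrow> real" where
  "lzG x q = (\<lambda>v. case v of Old a \<Rightarrow> if a = x then 0 else q (SV a)
   | Ny \<Rightarrow> q (SV x)/2 + 2*min (q North) (q (SV x)/2) - min (q South) (q (SV x)/2)
   | Nz \<Rightarrow> q (SV x)/2 + 2*min (q South) (q (SV x)/2) - min (q North) (q (SV x)/2)
   | Nb \<Rightarrow> q North - min (q North) (q (SV x)/2)
   | Na \<Rightarrow> q South - min (q South) (q (SV x)/2))"

definition lzH :: "('a lv \<Rightarrow> real) \<Rightarrow> 'a lv \<Rightarrow> real" where
  "lzH p = (\<lambda>v. case v of
      Ny \<Rightarrow> p Ny + min (p Nz) (max 0 (p Ny - p Nz)) - min (p Ny) (max 0 (p Nz - p Ny))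
    | Nz \<Rightarrow> p Nz - min (p Nz) (max 0 (p Ny - p Nz)) + min (p Ny) (max 0 (p Nz - p Ny))
    | _ \<Rightarrow> p v)"

lemma lzF_cont: "continuous_on S (lzF x)"
proof (intro continuous_on_coordinatewise_then_product)
  fix v show "continuous_on S (\<lambda>p. lzF x p v)"
  proof (cases v)
    case (SV w) then show ?thesis by (cases "w = x") (auto simp: lzF_def intro!: continuous_intros coord_cont)
  qed (auto simp: lzF_def intro!: continuous_intros coord_cont)
qed

lemma lzG_cont: "continuous_on S (lzG x)"
proof (intro continuous_on_coordinatewise_then_product)
  fix v show "continuous_on S (\<lambda>p. lzG x p v)"
  proof (cases v)
    case (Old w) then show ?thesis by (cases "w = x") (auto simp: lzG_def intro!: continuous_intros coord_cont)
  qed (auto simp: lzG_def intro!: continuous_intros coord_cont)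
qed

lemma lzH_cont: "continuous_on S lzH"
proof (intro continuous_on_coordinatewise_then_product)
  fix v show "continuous_on S (\<lambda>p. lzH p v)"
    by (cases v) (auto simp: lzH_def intro!: continuous_intros coord_cont)
qed

lemma L_facts:
  assumes p: "p \<in> realization (Ind (lozin_V V x) (lozin_E V E x Y Z))"
  shows "p Ny = 0 \<or> p Na = 0" "p Na = 0 \<or> p Nb = 0" "p Nb = 0 \<or> p Nz = 0"
    "p (Old v) \<noteq> 0 \<Longrightarrow> v \<in> V \<and> v \<noteq> x"
    "p Ny \<noteq> 0 \<Longrightarrow> v \<in> Y \<Longrightarrow> p (Old v) = 0"
    "p Nz \<noteq> 0 \<Longrightarrow> v \<in> Z \<Longrightarrow> p (Old v) = 0"
    "p (Old v) \<noteq> 0 \<Longrightarrow> p (Old w) \<noteq> 0 \<Longrightarrow> \<not> E v w"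
  using Ind_D(2)[OF p, of Ny Na] Ind_D(2)[OF p, of Na Nb] Ind_D(2)[OF p, of Nb Nz] Ind_D(1)[OF p, of "Old v"]
    Ind_D(2)[OF p, of Ny "Old v"] Ind_D(2)[OF p, of Nz "Old v"] Ind_D(2)[OF p, of "Old v" "Old w"] Ind_D(1)[OF p, of "Old w"]
  by (auto simp: lozin_E_def lozin_V_def)

lemma L_decomp:
  assumes p: "p \<in> realization (Ind (lozin_V V x) (lozin_E V E x Y Z))"
  defines "T \<equiv> {v. p (Old v) \<noteq> 0}"
  shows "finite T" "x \<notin> T" "T \<subseteq> V"
    "sum p (supp p) = sum (\<lambda>v. p (Old v)) T + p Ny + p Na + p Nb + p Nz"
    "supp p \<subseteq> insert Ny (insert Na (insert Nb (insert Nz (Old ` T))))"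
proof -
  have "T = Old -` supp p" by (auto simp: T_def supp_def)
  then show fT: "finite T" using real_D(2)[OF p] by (auto intro: finite_vimageI simp: inj_on_def)
  show "x \<notin> T" "T \<subseteq> V" using L_facts(4)[OF p] by (auto simp: T_def)
  show sub: "supp p \<subseteq> insert Ny (insert Na (insert Nb (insert Nz (Old ` T))))"
  proof
    fix v assume "v \<in> supp p" then show "v \<in> insert Ny (insert Na (insert Nb (insert Nz (Old ` T))))"
      by (cases v) (auto simp: supp_def T_def)
  qed
  have "sum p (supp p) = sum p (insert Ny (insert Na (insert Nb (insert Nz (Old ` T)))))"
    by (rule sum_supp_eq[OF _ sub]) (use fT in auto)
  also have "\<dots> = sum (\<lambda>v. p (Old v)) T + p Ny + p Na + p Nb + p Nz"
    using fT
    apply (subst sum.insert, simp, force)+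
    apply (subst sum.reindex, simp add: inj_on_def)
    apply simp
    done
  finally show "sum p (supp p) = sum (\<lambda>v. p (Old v)) T + p Ny + p Na + p Nb + p Nz" .
qed

lemma S_decomp:
  fixes x :: 'a
  assumes q: "q \<in> realization (suspension (Ind V E))"
  defines "T \<equiv> {v. v \<noteq> x \<and> q (SV v) \<noteq> 0}"
  shows "finite T" "x \<notin> T" "T \<subseteq> V"
    "sum q (supp q) = sum (\<lambda>v. q (SV v)) T + q (SV x) + q North + q South"
    "supp q \<subseteq> insert (SV x) (insert North (insert South (SV ` T)))"
proof -
  have "T \<subseteq> SV -` supp q" by (auto simp: T_def supp_def)
  then show fT: "finite T" using real_D(2)[OF q] finite_vimageI[of "supp q" SV]
    by (auto intro: finite_subset simp: inj_on_def)
  show "x \<notin> T" "T \<subseteq> V" using susp_D(2)[OF q] by (auto simp: T_def)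
  show sub: "supp q \<subseteq> insert (SV x) (insert North (insert South (SV ` T)))"
  proof
    fix v assume "v \<in> supp q" then show "v \<in> insert (SV x) (insert North (insert South (SV ` T)))"
      by (cases v) (auto simp: supp_def T_def)
  qed
  have "sum q (supp q) = sum q (insert (SV x) (insert North (insert South (SV ` T))))"
    by (rule sum_supp_eq[OF _ sub]) (use fT in auto)
  also have "\<dots> = sum (\<lambda>v. q (SV v)) T + q (SV x) + q North + q South"
    using fT \<open>x \<notin> T\<close>
    apply (subst sum.insert, simp, force)+
    apply (subst sum.reindex, simp add: inj_on_def)
    apply simp
    done
  finally show "sum q (supp q) = sum (\<lambda>v. q (SV v)) T + q (SV x) + q North + q South" .
qed


context
  fixes V :: "'a set" and E :: "'a \<Rightarrow> 'a \<Rightarrow> bool" and x :: 'a and Y Z :: "'a set"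
  assumes gr: "simple_graph V E" and xV: "x \<in> V" and YZ: "Y \<union> Z = nbhd V E x"
begin

lemma F_mem:
  assumes p: "p \<in> realization (Ind (lozin_V V x) (lozin_E V E x Y Z))"
  shows "lzF x p \<in> realization (suspension (Ind V E))"
proof -
  define T where "T = {v. p (Old v) \<noteq> 0}"
  note D = L_decomp[OF p, folded T_def]
  note LF = L_facts[OF p]
  have nn: "\<forall>v. 0 \<le> p v" using real_D(1)[OF p] .
  note A = arithF[of "p Ny" "p Nz" "p Na" "p Nb", OF nn[rule_format] nn[rule_format] nn[rule_format] nn[rule_format] LF(1-3)]
  let ?f = "lzF x p"
  let ?S = "insert (SV x) (insert North (insert South (SV ` T)))"
  have sub: "supp ?f \<subseteq> ?S"
  proof
    fix v assume "v \<in> supp ?f" then show "v \<in> ?S"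
      by (cases v) (auto simp: supp_def T_def lzF_def split: if_splits)
  qed
  have finS: "finite ?S" using D(1) by simp
  have "sum ?f (supp ?f) = sum ?f ?S" by (rule sum_supp_eq[OF finS sub])
  also have "\<dots> = sum (\<lambda>v. ?f (SV v)) T + ?f (SV x) + ?f North + ?f South"
    using D(1,2)
    apply (subst sum.insert, simp, force)+
    apply (subst sum.reindex, simp add: inj_on_def)
    apply (simp add: algebra_simps)
    done
  also have "sum (\<lambda>v. ?f (SV v)) T = sum (\<lambda>v. p (Old v)) T"
    using D(2) by (intro sum.cong) (auto simp: lzF_def)
  also have "sum (\<lambda>v. p (Old v)) T + ?f (SV x) + ?f North + ?f South = sum p (supp p)"
    unfolding D(4) by (simp add: lzF_def)
  also have "\<dots> = 1" using real_D(3)[OF p] .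
  finally have s1: "sum ?f (supp ?f) = 1" .
  have nnf: "\<forall>v. 0 \<le> ?f v"
  proof
    fix v show "0 \<le> ?f v"
    proof (cases v)
      case (SV w) then show ?thesis using A(3) nn by (simp add: lzF_def)
    next
      case North then show ?thesis using A(1) by (simp add: lzF_def)
    next
      case South then show ?thesis using A(2) by (simp add: lzF_def)
    qed
  qed
  have face: "supp ?f \<in> suspension (Ind V E)"
  proof (rule susp_I)
    show "\<not> (North \<in> supp ?f \<and> South \<in> supp ?f)" using A(4) by (auto simp: supp_def lzF_def)
    show "{v. SV v \<in> supp ?f} \<in> Ind V E"
    proof (rule Ind_I)
      show "{v. SV v \<in> supp ?f} \<subseteq> V" using xV LF(4) by (auto simp: supp_def lzF_def split: if_splits)
      fix v w assume v: "v \<in> {v. SV v \<in> supp ?f}" and w: "w \<in> {v. SV v \<in> supp ?f}"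
      have irr: "\<not> E u u" for u using gr by (auto simp: simple_graph_def)
      have sym: "E u u' \<Longrightarrow> E u' u" for u u' using gr by (auto simp: simple_graph_def)
      have xnb: "\<not> E x u" if "u \<noteq> x" "p (Old u) \<noteq> 0" "min (p Ny) (p Nz) \<noteq> 0" for u
      proof
        assume "E x u"
        moreover have "u \<in> V" using LF(4) that by auto
        ultimately have "u \<in> Y \<union> Z" using YZ by (auto simp: nbhd_def)
        moreover have "p Ny \<noteq> 0" "p Nz \<noteq> 0" using that(3) nn[rule_format, of Ny] nn[rule_format, of Nz] by (auto simp: min_def split: if_splits)
        ultimately show False using LF(5,6) that(2) by auto
      qed
      show "\<not> E v w"
      proof (cases "v = x")
        case True
        then show ?thesis
        proof (cases "w = x")
          case True then show ?thesis using \<open>v = x\<close> irr by simp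
        next
          case False then show ?thesis using \<open>v = x\<close> v w xnb by (auto simp: supp_def lzF_def)
        qed
      next
        case False
        then show ?thesis
        proof (cases "w = x")
          case True then show ?thesis using \<open>v \<noteq> x\<close> v w xnb sym by (auto simp: supp_def lzF_def)
        next
          case False then show ?thesis using \<open>v \<noteq> x\<close> v w LF(7) by (auto simp: supp_def lzF_def)
        qed
      qed
    qed
  qed
  show ?thesis by (rule real_I[OF face _ order_refl nnf s1]) (rule finite_subset[OF sub finS])
qed

lemma G_mem:
  assumes q: "q \<in> realization (suspension (Ind V E))"
  shows "lzG x q \<in> realization (Ind (lozin_V V x) (lozin_E V E x Y Z))"
proof -
  define T where "T = {v. v \<noteq> x \<and> q (SV v) \<noteq> 0}"
  note D = S_decomp[OF q, of x, folded T_def]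
  note SD = susp_D[OF q]
  have nn: "\<forall>v. 0 \<le> q v" using real_D(1)[OF q] .
  note A = arithG[of "q (SV x)" "q North" "q South", OF nn[rule_format] nn[rule_format] nn[rule_format] SD(1)]
  let ?g = "lzG x q"
  let ?S = "insert Ny (insert Na (insert Nb (insert Nz (Old ` T))))"
  have sub: "supp ?g \<subseteq> ?S"
  proof
    fix v assume "v \<in> supp ?g" then show "v \<in> ?S"
      by (cases v) (auto simp: supp_def T_def lzG_def split: if_splits)
  qed
  have finS: "finite ?S" using D(1) by simp
  have "sum ?g (supp ?g) = sum ?g ?S" by (rule sum_supp_eq[OF finS sub])
  also have "\<dots> = sum (\<lambda>v. ?g (Old v)) T + ?g Ny + ?g Na + ?g Nb + ?g Nz"
    using D(1)
    apply (subst sum.insert, simp, force)+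
    apply (subst sum.reindex, simp add: inj_on_def)
    apply (simp add: algebra_simps)
    done
  also have "sum (\<lambda>v. ?g (Old v)) T = sum (\<lambda>v. q (SV v)) T"
    by (intro sum.cong) (auto simp: lzG_def T_def)
  also have "sum (\<lambda>v. q (SV v)) T + ?g Ny + ?g Na + ?g Nb + ?g Nz = sum q (supp q)"
    unfolding D(4) using A(10) by (simp add: lzG_def)
  also have "\<dots> = 1" using real_D(3)[OF q] .
  finally have s1: "sum ?g (supp ?g) = 1" .
  have nnf: "\<forall>v. 0 \<le> ?g v"
  proof
    fix v show "0 \<le> ?g v"
    proof (cases v)
      case (Old w) then show ?thesis using nn by (simp add: lzG_def)
    qed (use A(1-4) in \<open>simp_all add: lzG_def\<close>)
  qed
  have Enb: "E x b" if "b \<in> Y \<union> Z" for b using YZ that by (auto simp: nbhd_def)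
  have arc: "\<not> lozin_arc V E x Y Z u w" if u: "u \<in> supp ?g" and w: "w \<in> supp ?g" for u w
  proof (cases u)
    case (Old a)
    show ?thesis
    proof (cases w)
      case (Old b) then show ?thesis using \<open>u = Old a\<close> u w SD(3)[of a b] by (auto simp: supp_def lzG_def split: if_splits)
    qed (use \<open>u = Old a\<close> in auto)
  next
    case Ny
    show ?thesis
    proof (cases w)
      case (Old b)
      show ?thesis
      proof
        assume "lozin_arc V E x Y Z u w"
        then have bY: "b \<in> Y" using Ny Old by simp
        have "q (SV x) \<noteq> 0" using A(8) u Ny by (auto simp: supp_def lzG_def)
        moreover have "q (SV b) \<noteq> 0" using w Old by (auto simp: supp_def lzG_def split: if_splits)
        ultimately show False using SD(3)[of x b] Enb[of b] bY by auto
      qed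
    next
      case Na then show ?thesis using Ny u w A(5) by (auto simp: supp_def lzG_def)
    qed (use Ny in auto)
  next
    case Nz
    show ?thesis
    proof (cases w)
      case (Old b)
      show ?thesis
      proof
        assume "lozin_arc V E x Y Z u w"
        then have bY: "b \<in> Z" using Nz Old by simp
        have "q (SV x) \<noteq> 0" using A(9) u Nz by (auto simp: supp_def lzG_def)
        moreover have "q (SV b) \<noteq> 0" using w Old by (auto simp: supp_def lzG_def split: if_splits)
        ultimately show False using SD(3)[of x b] Enb[of b] bY by auto
      qed
    qed (use Nz in auto)
  next
    case Na
    show ?thesis
    proof (cases w)
      case Nb then show ?thesis using Na u w A(6) by (auto simp: supp_def lzG_def)
    qed (use Na in auto)
  next
    case Nb
    show ?thesis
    proof (cases w)
      case Nz then show ?thesis using Nb u w A(7) by (auto simp: supp_def lzG_def)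
    qed (use Nb in auto)
  qed
  have face: "supp ?g \<in> Ind (lozin_V V x) (lozin_E V E x Y Z)"
  proof (rule Ind_I)
    show "supp ?g \<subseteq> lozin_V V x"
    proof
      fix v assume "v \<in> supp ?g" then show "v \<in> lozin_V V x"
        using SD(2) by (cases v) (auto simp: supp_def lzG_def lozin_V_def split: if_splits)
    qed
    fix u w assume "u \<in> supp ?g" "w \<in> supp ?g"
    then show "\<not> lozin_E V E x Y Z u w" using arc by (auto simp: lozin_E_def)
  qed
  show ?thesis by (rule real_I[OF face _ order_refl nnf s1]) (rule finite_subset[OF sub finS])
qed

lemma H_supp:
  assumes p: "p \<in> realization (Ind (lozin_V V x) (lozin_E V E x Y Z))"
  shows "supp (lzH p) \<subseteq> supp p"
proof -
  note LF = L_facts[OF p]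
  have nn: "\<forall>v. 0 \<le> p v" using real_D(1)[OF p] .
  note A = arithF[of "p Ny" "p Nz" "p Na" "p Nb", OF nn[rule_format] nn[rule_format] nn[rule_format] nn[rule_format] LF(1-3)]
  show ?thesis
  proof
    fix v assume v: "v \<in> supp (lzH p)" show "v \<in> supp p"
    proof (cases v)
      case Ny then show ?thesis using v A(7) by (simp add: supp_def lzH_def)
    next
      case Nz then show ?thesis using v A(8) by (simp add: supp_def lzH_def)
    qed (use v in \<open>simp_all add: supp_def lzH_def\<close>)
  qed
qed

lemma H_mem:
  assumes p: "p \<in> realization (Ind (lozin_V V x) (lozin_E V E x Y Z))"
  shows "lzH p \<in> realization (Ind (lozin_V V x) (lozin_E V E x Y Z))"
proof -
  define T where "T = {v. p (Old v) \<noteq> 0}"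
  note D = L_decomp[OF p, folded T_def]
  note LF = L_facts[OF p]
  have nn: "\<forall>v. 0 \<le> p v" using real_D(1)[OF p] .
  note A = arithF[of "p Ny" "p Nz" "p Na" "p Nb", OF nn[rule_format] nn[rule_format] nn[rule_format] nn[rule_format] LF(1-3)]
  let ?S = "insert Ny (insert Na (insert Nb (insert Nz (Old ` T))))"
  have sub: "supp (lzH p) \<subseteq> ?S" using H_supp[OF p] D(5) by blast
  have finS: "finite ?S" using D(1) by simp
  have "sum (lzH p) (supp (lzH p)) = sum (lzH p) ?S" by (rule sum_supp_eq[OF finS sub])
  also have "\<dots> = sum (\<lambda>v. p (Old v)) T + p Ny + p Na + p Nb + p Nz"
    unfolding sum_lv[OF D(1)] using A(9) by (simp add: lzH_def)
  also have "\<dots> = 1" using D(4) real_D(3)[OF p] by simp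
  finally have s1: "sum (lzH p) (supp (lzH p)) = 1" .
  have nnf: "\<forall>v. 0 \<le> lzH p v"
  proof
    fix v show "0 \<le> lzH p v" using A(5,6) nn by (cases v) (simp_all add: lzH_def)
  qed
  obtain \<sigma> where s: "\<sigma> \<in> Ind (lozin_V V x) (lozin_E V E x Y Z)" "finite \<sigma>" "supp p \<subseteq> \<sigma>"
    using real_D(4)[OF p] by blast
  show ?thesis by (rule real_I[OF s(1,2) _ nnf s1]) (use H_supp[OF p] s(3) in blast)
qed

lemma FG_carrier:
  assumes q: "q \<in> realization (suspension (Ind V E))"
  shows "supp (lzF x (lzG x q)) \<subseteq> supp q"
proof -
  note SD = susp_D[OF q]
  have nn: "\<forall>v. 0 \<le> q v" using real_D(1)[OF q] .
  note A = arithG[of "q (SV x)" "q North" "q South", OF nn[rule_format] nn[rule_format] nn[rule_format] SD(1)]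
  show ?thesis
  proof
    fix v assume v: "v \<in> supp (lzF x (lzG x q))" show "v \<in> supp q"
    proof (cases v)
      case (SV w) then show ?thesis using v A(11) by (cases "w = x") (simp_all add: supp_def lzF_def lzG_def)
    next
      case North then show ?thesis using v A(12) by (simp add: supp_def lzF_def lzG_def)
    next
      case South then show ?thesis using v A(13) by (simp add: supp_def lzF_def lzG_def)
    qed
  qed
qed

lemma GF_carrier:
  assumes p: "p \<in> realization (Ind (lozin_V V x) (lozin_E V E x Y Z))"
  shows "supp (lzG x (lzF x p)) \<union> supp (lzH p) \<in> Ind (lozin_V V x) (lozin_E V E x Y Z)"
proof -
  note LF = L_facts[OF p]
  have nn: "\<forall>v. 0 \<le> p v" using real_D(1)[OF p] .
  note A = arithF[of "p Ny" "p Nz" "p Na" "p Nb", OF nn[rule_format] nn[rule_format] nn[rule_format] nn[rule_format] LF(1-3)]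
  have gfm: "lzG x (lzF x p) \<in> realization (Ind (lozin_V V x) (lozin_E V E x Y Z))"
    by (rule G_mem[OF F_mem[OF p]])
  have hm: "lzH p \<in> realization (Ind (lozin_V V x) (lozin_E V E x Y Z))" by (rule H_mem[OF p])
  let ?U = "supp (lzG x (lzF x p)) \<union> supp (lzH p)"
  have old: "p (Old a) \<noteq> 0" if "Old a \<in> ?U" for a
    using that by (auto simp: supp_def lzG_def lzF_def lzH_def split: if_splits)
  have ys: "p Ny \<noteq> 0" if "Ny \<in> ?U" using that A(10) by (auto simp: supp_def lzG_def lzF_def lzH_def)
  have zs: "p Nz \<noteq> 0" if "Nz \<in> ?U" using that A(11) by (auto simp: supp_def lzG_def lzF_def lzH_def)
  have ya: "\<not> (Ny \<in> ?U \<and> Na \<in> ?U)" using A(12) by (auto simp: supp_def lzG_def lzF_def lzH_def)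
  have ab: "\<not> (Nb \<in> ?U \<and> Na \<in> ?U)" using A(13) by (auto simp: supp_def lzG_def lzF_def lzH_def)
  have bz: "\<not> (Nb \<in> ?U \<and> Nz \<in> ?U)" using A(14) by (auto simp: supp_def lzG_def lzF_def lzH_def)
  have arc: "\<not> lozin_arc V E x Y Z u w" if u: "u \<in> ?U" and w: "w \<in> ?U" for u w
  proof (cases u)
    case (Old a)
    show ?thesis
    proof (cases w)
      case (Old b) then show ?thesis using \<open>u = Old a\<close> old u w LF(7)[of a b] by auto
    qed (use \<open>u = Old a\<close> in auto)
  next
    case Ny
    show ?thesis
    proof (cases w)
      case (Old b) then show ?thesis using Ny u w old ys LF(5)[of b] by auto
    next
      case Na then show ?thesis using Ny u w ya by auto
    qed (use Ny in auto)
  next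
    case Nz
    show ?thesis
    proof (cases w)
      case (Old b) then show ?thesis using Nz u w old zs LF(6)[of b] by auto
    qed (use Nz in auto)
  next
    case Na
    show ?thesis
    proof (cases w)
      case Nb then show ?thesis using Na u w ab by auto
    qed (use Na in auto)
  next
    case Nb
    show ?thesis
    proof (cases w)
      case Nz then show ?thesis using Nb u w bz by auto
    qed (use Nb in auto)
  qed
  show ?thesis
  proof (rule Ind_I)
    show "?U \<subseteq> lozin_V V x" using Ind_D(1)[OF gfm] Ind_D(1)[OF hm] by (auto simp: supp_def)
    fix u w assume "u \<in> ?U" "w \<in> ?U"
    then show "\<not> lozin_E V E x Y Z u w" using arc by (auto simp: lozin_E_def)
  qed
qed

end

theorem mainTheorem14:
  fixes V :: "'a set" and E :: "'a \<Rightarrow> 'a \<Rightarrow> bool" and x :: 'a and Y Z :: "'a set"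
  assumes "simple_graph V E"
    and "x \<in> V"
    and "Y \<union> Z = nbhd V E x"
    and "Y \<inter> Z = {}"
  shows "(top_of_set (realization (Ind (lozin_V V x) (lozin_E V E x Y Z))))
           homotopy_equivalent_space (top_of_set (realization (suspension (Ind V E))))"
proof -
  let ?L = "realization (Ind (lozin_V V x) (lozin_E V E x Y Z))"
  let ?S = "realization (suspension (Ind V E))"
  note Fm = F_mem[OF assms(1-3)] and Gm = G_mem[OF assms(1-3)] and Hm = H_mem[OF assms(1-3)]
  have cF: "continuous_map (top_of_set ?L) (top_of_set ?S) (lzF x)"
    using Fm by (auto simp: lzF_cont)
  have cG: "continuous_map (top_of_set ?S) (top_of_set ?L) (lzG x)"
    using Gm by (auto simp: lzG_cont)
  have h1: "homotopic_with (\<lambda>_. True) (top_of_set ?L) (top_of_set ?L) (\<lambda>p. lzG x (lzF x p)) lzH"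
  proof (rule straight_line)
    show "continuous_on ?L (\<lambda>p. lzG x (lzF x p))"
      using continuous_on_compose[OF lzF_cont lzG_cont] by (simp add: o_def)
    show "continuous_on ?L lzH" by (rule lzH_cont)
    fix p assume p: "p \<in> ?L"
    show "lzG x (lzF x p) \<in> ?L" using Gm[OF Fm[OF p]] .
    show "lzH p \<in> ?L" using Hm[OF p] .
    have f1: "finite (supp (lzG x (lzF x p)))" using real_D(2)[OF Gm[OF Fm[OF p]]] .
    have f2: "finite (supp (lzH p))" using real_D(2)[OF Hm[OF p]] .
    show "\<exists>\<sigma>\<in>Ind (lozin_V V x) (lozin_E V E x Y Z). finite \<sigma> \<and> supp (lzG x (lzF x p)) \<union> supp (lzH p) \<subseteq> \<sigma>"
      using GF_carrier[OF assms(1-3) p] f1 f2 by blast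
  qed
  have h2: "homotopic_with (\<lambda>_. True) (top_of_set ?L) (top_of_set ?L) lzH id"
  proof (rule straight_line)
    show "continuous_on ?L lzH" by (rule lzH_cont)
    show "continuous_on ?L id" unfolding id_def by (rule continuous_on_id)
    fix p assume p: "p \<in> ?L"
    show "lzH p \<in> ?L" using Hm[OF p] .
    show "id p \<in> ?L" using p by simp
    show "\<exists>\<sigma>\<in>Ind (lozin_V V x) (lozin_E V E x Y Z). finite \<sigma> \<and> supp (lzH p) \<union> supp (id p) \<subseteq> \<sigma>"
      using real_D(4)[OF p] H_supp[OF assms(1-3) p] by auto
  qed
  have h3: "homotopic_with (\<lambda>_. True) (top_of_set ?S) (top_of_set ?S) (\<lambda>q. lzF x (lzG x q)) id"
  proof (rule straight_line)
    show "continuous_on ?S (\<lambda>q. lzF x (lzG x q))"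
      using continuous_on_compose[OF lzG_cont lzF_cont] by (simp add: o_def)
    show "continuous_on ?S id" unfolding id_def by (rule continuous_on_id)
    fix q assume q: "q \<in> ?S"
    show "lzF x (lzG x q) \<in> ?S" using Fm[OF Gm[OF q]] .
    show "id q \<in> ?S" using q by simp
    show "\<exists>\<sigma>\<in>suspension (Ind V E). finite \<sigma> \<and> supp (lzF x (lzG x q)) \<union> supp (id q) \<subseteq> \<sigma>"
      using real_D(4)[OF q] FG_carrier[OF assms(1-3) q] by auto
  qed
  have "homotopic_with (\<lambda>_. True) (top_of_set ?L) (top_of_set ?L) (lzG x \<circ> lzF x) id"
    using homotopic_with_trans[OF h1 h2] by (simp add: o_def)
  moreover have "homotopic_with (\<lambda>_. True) (top_of_set ?S) (top_of_set ?S) (lzF x \<circ> lzG x) id"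
    using h3 by (simp add: o_def)
  ultimately show ?thesis unfolding homotopy_equivalent_space_def using cF cG by blast
qed

end
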